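(* Let $0<d<2$ and let $\{Q_m\}_{m=1}^{M}$ be a finite collection of dyadic squares in the plane $\mathbb{R}^2\cong\mathbb{C}$ satisfying (D) $4Q_m\cap 4Q_{m'}=\emptyset$ for all $m\neq m'$, and (P) there is a constant $C_P$ such that for every dyadic square $Q$ of the same dyadic lattice, $\sum_{Q_m\subset Q}\ell(Q_m)^{2-d}\le C_P\,\ell(Q)^{2-d}$. Let $X=\bigcup_{m=1}^M Q_m$, $\mu=\sum_{m=1}^M \ell(Q_m)^{-d}\, m_2|_{Q_m}$, and define for $x,y\in X$ $$K'(x,y)=\begin{cases}0, & \text{if } x,y \text{ lie in the same square } Q_i,\\ \dfrac{\ell(Q_j)^d}{(x-y)^2}, & \text{if } y\in Q_i,\ x\in Q_j,\ i\neq j,\end{cases}$$ (points of the plane viewed as complex numbers). Define the maximal operator $$M_{\mu,3}f(x)=\sup_{R>0}\frac{1}{\mu(B(x,3R))}\int_{B(x,R)}|f(y)|\,d\mu(y).$$ Then there is a constant $C$ (independent of $f$ and $x$) such that for every $\mu$-measurable function $f$ on $X$ and every $x\in X$, $$\Big|\int_X K'(x,y)f(y)\,d\mu(y)\Big|\le \int_X |K'(x,y)|\,|f(y)|\,d\mu(y)\le C\,M_{\mu,3}f(x),$$ i.e. the operator $f\mapsto\int_X K'(x,y)f(y)\,d\mu(y)$ is pointwise majorized by $C\,M_{\mu,3}f$.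
   Context: $\ell(Q)$ denotes the side length of a square $Q$; $4Q$ is the square with the same center as $Q$ and side length $4\ell(Q)$; $m_2$ is two-dimensional Lebesgue measure and $m_2|_{Q}$ its restriction to $Q$. $B(x,R)$ denotes the Euclidean disc of center $x$ and radius $R$ (intersected with $X$, where $\mu$ lives). *)

theory Defs
  imports "HOL-Analysis.Analysis"
begin

text \<open>Dyadic squares of the standard dyadic lattice in the plane (identified with complex),
  indexed by (k, j, l): the half-open square [j 2^k, (j+1) 2^k) x [l 2^k, (l+1) 2^k).\<close>

definition dside :: "int \<times> int \<times> int \<Rightarrow> real" where
  "dside Q = (case Q of (k, j, l) \<Rightarrow> (2::real) powr (real_of_int k))"

definition dsq :: "int \<times> int \<times> int \<Rightarrow> complex set" where
  "dsq Q = (case Q of (k, j, l) \<Rightarrow>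
     {z. real_of_int j * dside Q \<le> Re z \<and> Re z < (real_of_int j + 1) * dside Q \<and>
         real_of_int l * dside Q \<le> Im z \<and> Im z < (real_of_int l + 1) * dside Q})"

text \<open>4Q: same center, side length 4 l(Q).\<close>
definition dsq4 :: "int \<times> int \<times> int \<Rightarrow> complex set" where
  "dsq4 Q = (case Q of (k, j, l) \<Rightarrow>
     {z. (real_of_int j + 1/2 - 2) * dside Q \<le> Re z \<and> Re z < (real_of_int j + 1/2 + 2) * dside Q \<and>
         (real_of_int l + 1/2 - 2) * dside Q \<le> Im z \<and> Im z < (real_of_int l + 1/2 + 2) * dside Q})"

definition dmu :: "real \<Rightarrow> nat \<Rightarrow> (nat \<Rightarrow> int \<times> int \<times> int) \<Rightarrow> complex measure" where
  "dmu d M q = density lebesgue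
     (\<lambda>z. \<Sum>m\<in>{1..M}. ennreal (dside (q m) powr (- d)) * indicator (dsq (q m)) z)"

text \<open>The kernel K'(x,y): 0 if x,y in the same square (or outside X),
  l(Q_j)^d / (x-y)^2 if y in Q_i, x in Q_j, i \<noteq> j.\<close>
definition Kp :: "real \<Rightarrow> nat \<Rightarrow> (nat \<Rightarrow> int \<times> int \<times> int) \<Rightarrow> complex \<Rightarrow> complex \<Rightarrow> complex" where
  "Kp d M q x y = (\<Sum>i\<in>{1..M}. \<Sum>j\<in>{1..M}.
     if i \<noteq> j \<and> y \<in> dsq (q i) \<and> x \<in> dsq (q j)
     then complex_of_real (dside (q j) powr d) / (x - y)^2 else 0)"

definition maxfn3 :: "complex measure \<Rightarrow> (complex \<Rightarrow> complex) \<Rightarrow> complex \<Rightarrow> ennreal" where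
  "maxfn3 \<mu> f x = (SUP R\<in>{0<..}. (\<integral>\<^sup>+ y\<in>ball x R. ennreal (cmod (f y)) \<partial>\<mu>) / emeasure \<mu> (ball x (3 * R)))"

end

theory Submission
  imports Defs
begin

lemma dside_pos: "dside Q > 0"
  by (cases Q) (simp add: dside_def)

lemma dsq_iff: "z \<in> dsq (k,j,l) \<longleftrightarrow>
   real_of_int j * dside (k,j,l) \<le> Re z \<and> Re z < (real_of_int j + 1) * dside (k,j,l) \<and>
   real_of_int l * dside (k,j,l) \<le> Im z \<and> Im z < (real_of_int l + 1) * dside (k,j,l)"
  by (simp add: dsq_def)

lemma dsq4_iff: "z \<in> dsq4 (k,j,l) \<longleftrightarrow>
     (real_of_int j + 1/2 - 2) * dside (k,j,l) \<le> Re z \<and> Re z < (real_of_int j + 1/2 + 2) * dside (k,j,l) \<and>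
     (real_of_int l + 1/2 - 2) * dside (k,j,l) \<le> Im z \<and> Im z < (real_of_int l + 1/2 + 2) * dside (k,j,l)"
  by (simp add: dsq4_def)

lemma dsq_sub4: "dsq Q \<subseteq> dsq4 Q"
proof (cases Q)
  case (fields k j l)
  have s: "dside (k,j,l) > 0" by (rule dside_pos)
  show ?thesis unfolding fields
    using s by (auto simp: dsq_iff dsq4_iff algebra_simps)
qed

lemma far: assumes "x \<in> dsq Q" "y \<notin> dsq4 Q" shows "cmod (x - y) \<ge> dside Q"
proof (cases Q)
  case (fields k j l)
  define s where "s = dside (k,j,l)"
  have s: "s > 0" unfolding s_def by (rule dside_pos)
  have x: "real_of_int j * s \<le> Re x" "Re x < (real_of_int j + 1) * s" "real_of_int l * s \<le> Im x" "Im x < (real_of_int l + 1) * s"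
    using assms(1) unfolding fields dsq_iff s_def by auto
  have y: "\<not>((real_of_int j + 1/2 - 2) * s \<le> Re y \<and> Re y < (real_of_int j + 1/2 + 2) * s \<and>
     (real_of_int l + 1/2 - 2) * s \<le> Im y \<and> Im y < (real_of_int l + 1/2 + 2) * s)"
    using assms(2) unfolding fields dsq4_iff s_def by auto
  have "s \<le> \<bar>Re x - Re y\<bar> \<or> s \<le> \<bar>Im x - Im y\<bar>"
    using x y s by (auto simp: algebra_simps)
  moreover have "\<bar>Re x - Re y\<bar> \<le> cmod (x - y)" "\<bar>Im x - Im y\<bar> \<le> cmod (x - y)"
    using abs_Re_le_cmod[of "x-y"] abs_Im_le_cmod[of "x-y"] by auto
  ultimately show ?thesis unfolding fields s_def by linarith
qed

lemma near: assumes "y \<in> dsq Q" "cmod (y - x) < r" "r \<le> dside Q" shows "x \<in> dsq4 Q"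
proof (cases Q)
  case (fields k j l)
  define s where "s = dside (k,j,l)"
  have s: "s > 0" unfolding s_def by (rule dside_pos)
  have y: "real_of_int j * s \<le> Re y" "Re y < (real_of_int j + 1) * s" "real_of_int l * s \<le> Im y" "Im y < (real_of_int l + 1) * s"
    using assms(1) unfolding fields dsq_iff s_def by auto
  have "\<bar>Re y - Re x\<bar> < r" "\<bar>Im y - Im x\<bar> < r"
    using abs_Re_le_cmod[of "y-x"] abs_Im_le_cmod[of "y-x"] assms(2) by auto
  then show ?thesis using y s assms(3) unfolding fields dsq4_iff s_def[symmetric]
    by (auto simp: algebra_simps)
qed

lemma dsq_borel[measurable]: "dsq Q \<in> sets borel"
proof -
  obtain k j l where Q: "Q = (k,j,l)" by (cases Q)
  have "dsq Q = {z. real_of_int j * dside Q \<le> Re z} \<inter> {z. Re z < (real_of_int j + 1) * dside Q} \<inter>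
      {z. real_of_int l * dside Q \<le> Im z} \<inter> {z. Im z < (real_of_int l + 1) * dside Q}"
    unfolding Q by (auto simp: dsq_iff)
  also have "\<dots> \<in> sets borel" by measurable
  finally show ?thesis .
qed

lemma dsq_leb[measurable]: "dsq Q \<in> sets lebesgue"
  using dsq_borel by (simp add: sets_completionI_sets)

lemma ball_leb[measurable]: "ball (x::complex) r \<in> sets lebesgue"
  by (simp add: sets_completionI_sets)

lemma sets_dmu[simp, measurable_cong]: "sets (dmu d M q) = sets lebesgue"
  by (simp add: dmu_def)

lemma emeasure_dmu: assumes "A \<in> sets lebesgue"
  shows "emeasure (dmu d M q) A = (\<Sum>m\<in>{1..M}. ennreal (dside (q m) powr (- d)) * emeasure lebesgue (dsq (q m) \<inter> A))"
proof -
  have "emeasure (dmu d M q) A = (\<integral>\<^sup>+ z. (\<Sum>m\<in>{1..M}. ennreal (dside (q m) powr (- d)) * indicator (dsq (q m)) z) * indicator A z \<partial>lebesgue)"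
    unfolding dmu_def using assms by (intro emeasure_density) measurable
  also have "\<dots> = (\<integral>\<^sup>+ z. (\<Sum>m\<in>{1..M}. ennreal (dside (q m) powr (- d)) * indicator (dsq (q m) \<inter> A) z) \<partial>lebesgue)"
    by (intro nn_integral_cong) (simp only: sum_distrib_right indicator_inter_arith mult.assoc)
  also have "\<dots> = (\<Sum>m\<in>{1..M}. ennreal (dside (q m) powr (- d)) * emeasure lebesgue (dsq (q m) \<inter> A))"
    using assms by (subst nn_integral_sum) (auto simp: nn_integral_cmult_indicator)
  finally show ?thesis .
qed

lemma leb_cbox: assumes "r \<ge> 0" "S \<subseteq> cbox a (a + complex_of_real r * (1 + \<i>))"
  shows "emeasure lebesgue S \<le> ennreal (r*r)"
proof -
  have "emeasure lebesgue S \<le> emeasure lebesgue (cbox a (a + complex_of_real r * (1 + \<i>)))"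
    by (rule emeasure_mono[OF assms(2)]) simp
  also have "\<dots> = ennreal (r*r)" using assms(1) by (simp add: emeasure_lborel_cbox_eq Basis_complex_def)
  finally show ?thesis .
qed

lemma leb_ball: assumes "r \<ge> 0" shows "emeasure lebesgue (ball (x::complex) r \<inter> S) \<le> ennreal (4 * r powr 2)"
proof -
  have "ball x r \<inter> S \<subseteq> cbox (x - complex_of_real r * (1 + \<i>)) ((x - complex_of_real r * (1 + \<i>)) + complex_of_real (2*r) * (1 + \<i>))"
  proof
    fix z assume "z \<in> ball x r \<inter> S"
    then have "cmod (x - z) < r" by (auto simp: dist_norm)
    then have "\<bar>Re x - Re z\<bar> < r" "\<bar>Im x - Im z\<bar> < r"
      using abs_Re_le_cmod[of "x-z"] abs_Im_le_cmod[of "x-z"] by auto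
    then show "z \<in> cbox (x - complex_of_real r * (1 + \<i>)) ((x - complex_of_real r * (1 + \<i>)) + complex_of_real (2*r) * (1 + \<i>))"
      by (auto simp: mem_box Basis_complex_def)
  qed
  from leb_cbox[OF _ this] assms show ?thesis by (simp add: power2_eq_square)
qed

lemma leb_dsq: "emeasure lebesgue (dsq Q \<inter> S) \<le> ennreal (dside Q powr 2)"
proof -
  obtain k j l where Q: "Q = (k,j,l)" by (cases Q)
  define s where "s = dside Q"
  have s: "s > 0" unfolding s_def by (rule dside_pos)
  have "dsq Q \<inter> S \<subseteq> cbox (Complex (real_of_int j * s) (real_of_int l * s)) ((Complex (real_of_int j * s) (real_of_int l * s)) + complex_of_real s * (1 + \<i>))"
    unfolding Q s_def by (auto simp: mem_box Basis_complex_def dsq_iff algebra_simps)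
  from leb_cbox[OF _ this] s show ?thesis by (simp add: s_def power2_eq_square)
qed

lemma sum_UN_le:
  fixes h :: "'a \<Rightarrow> real"
  assumes "finite I" "\<And>i. i \<in> I \<Longrightarrow> finite (T i)" "\<And>x. h x \<ge> 0"
  shows "sum h (\<Union>i\<in>I. T i) \<le> (\<Sum>i\<in>I. sum h (T i))"
  using assms
proof (induction I rule: finite_induct)
  case empty then show ?case by simp
next
  case (insert i I)
  have fU: "finite (\<Union>i\<in>I. T i)" using insert by auto
  have "sum h (\<Union>i\<in>insert i I. T i) = sum h (T i \<union> (\<Union>i\<in>I. T i))" by simp
  also have "\<dots> \<le> sum h (T i) + sum h (\<Union>i\<in>I. T i)"
    using sum_Un[OF insert.prems(1)[of i] fU, of h] sum_nonneg[of "T i \<inter> (\<Union>i\<in>I. T i)" h] insert.prems(2)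
    by auto
  also have "\<dots> \<le> sum h (T i) + (\<Sum>i\<in>I. sum h (T i))" using insert by auto
  finally show ?case using insert by simp
qed

lemma nest1:
  fixes s t :: real and jm :: int and e :: nat
  assumes s: "s > 0" and t: "real_of_int jm * s \<le> t" "t < (real_of_int jm + 1) * s"
  shows "real_of_int \<lfloor>t / (s * 2^e)\<rfloor> * (s * 2^e) \<le> real_of_int jm * s \<and>
         (real_of_int jm + 1) * s \<le> (real_of_int \<lfloor>t / (s * 2^e)\<rfloor> + 1) * (s * 2^e)"
proof -
  define a where "a = s * 2^e"
  define J where "J = \<lfloor>t / a\<rfloor>"
  have a: "a > 0" using s by (simp add: a_def)
  have "real_of_int J \<le> t / a" "t / a < real_of_int J + 1" unfolding J_def by linarith+
  then have J1: "real_of_int J * a \<le> t" and J2: "t < (real_of_int J + 1) * a"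
    using a by (simp_all add: field_simps)
  have "real_of_int J * 2^e * s < (real_of_int jm + 1) * s" using J1 t unfolding a_def by (simp add: algebra_simps)
  then have "real_of_int (J * 2^e) < real_of_int (jm + 1)" using s by simp
  then have "J * 2^e \<le> jm" by linarith
  then have "real_of_int (J * 2^e) \<le> real_of_int jm" by linarith
  then have A: "real_of_int J * a \<le> real_of_int jm * s" using s unfolding a_def
    by (metis (no_types, lifting) mult.assoc mult.commute mult_right_mono of_int_mult of_int_numeral of_int_power order_less_imp_le)
  have "real_of_int jm * s < (real_of_int J + 1) * 2^e * s" using J2 t unfolding a_def by (simp add: algebra_simps)
  then have "real_of_int jm < real_of_int ((J + 1) * 2^e)" using s by simp
  then have "jm + 1 \<le> (J+1) * 2^e" by linarith
  then have "real_of_int (jm + 1) \<le> real_of_int ((J + 1) * 2^e)" by linarith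
  then have B: "(real_of_int jm + 1) * s \<le> (real_of_int J + 1) * a" using s unfolding a_def
    by (metis (no_types, lifting) mult.assoc mult.commute mult_right_mono of_int_add of_int_1 of_int_mult of_int_numeral of_int_power order_less_imp_le)
  show ?thesis using A B unfolding a_def J_def by simp
qed

lemma dyadic_parent:
  assumes "dside Q \<le> 2 powr real_of_int k" "y \<in> dsq Q"
  shows "dsq Q \<subseteq> dsq (k, \<lfloor>Re y / 2 powr real_of_int k\<rfloor>, \<lfloor>Im y / 2 powr real_of_int k\<rfloor>)"
proof -
  obtain km jm lm where Q: "Q = (km,jm,lm)" by (cases Q)
  define s where "s = dside Q"
  have s: "s > 0" unfolding s_def by (rule dside_pos)
  have sdef: "s = 2 powr real_of_int km" unfolding s_def Q dside_def by simp
  have "km \<le> k" using assms(1) unfolding s_def[symmetric] sdef by simp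
  define e where "e = nat (k - km)"
  have a: "2 powr real_of_int k = s * 2^e"
  proof -
    have "2 powr real_of_int k = 2 powr (real_of_int km + real e)" using \<open>km \<le> k\<close> unfolding e_def by simp
    also have "\<dots> = s * 2^e" unfolding sdef by (simp add: powr_add powr_realpow)
    finally show ?thesis .
  qed
  have dk: "dside (k, a, b) = s * 2^e" for a b using a by (simp add: dside_def)
  have y: "real_of_int jm * s \<le> Re y" "Re y < (real_of_int jm + 1) * s" "real_of_int lm * s \<le> Im y" "Im y < (real_of_int lm + 1) * s"
    using assms(2) unfolding Q dsq_iff s_def by auto
  note n1 = nest1[OF s y(1,2), of e] and n2 = nest1[OF s y(3,4), of e]
  show ?thesis
  proof
    fix z assume "z \<in> dsq Q"
    then have z: "real_of_int jm * s \<le> Re z" "Re z < (real_of_int jm + 1) * s" "real_of_int lm * s \<le> Im z" "Im z < (real_of_int lm + 1) * s"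
      unfolding Q dsq_iff s_def by auto
    show "z \<in> dsq (k, \<lfloor>Re y / 2 powr real_of_int k\<rfloor>, \<lfloor>Im y / 2 powr real_of_int k\<rfloor>)"
      unfolding dsq_iff dk a using n1 n2 z by linarith
  qed
qed

lemma floor_close: fixes u v :: real assumes "\<bar>u - v\<bar> < 1" shows "\<lfloor>u\<rfloor> - \<lfloor>v\<rfloor> \<in> {-1..1}"
  using assms by (simp; linarith)

lemma S_bound:
  fixes d C_P r :: real and x :: complex and M :: nat and q :: "nat \<Rightarrow> int \<times> int \<times> int"
  assumes P: "\<forall>Q. (\<Sum>m\<in>{m\<in>{1..M}. dsq (q m) \<subseteq> dsq Q}. dside (q m) powr (2 - d)) \<le> C_P * dside Q powr (2 - d)"
    and d: "d < 2" and r: "r > 0"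
  shows "(\<Sum>m\<in>{m\<in>{1..M}. dside (q m) \<le> r \<and> dsq (q m) \<inter> ball x r \<noteq> {}}. dside (q m) powr (2 - d))
           \<le> 9 * \<bar>C_P\<bar> * (2 * r) powr (2 - d)"
proof -
  define k where "k = \<lceil>log 2 r\<rceil>"
  define a where "a = 2 powr real_of_int k"
  have a0: "a > 0" unfolding a_def by simp
  have ra: "r \<le> a"
  proof -
    have "r = 2 powr log 2 r" using r by simp
    also have "\<dots> \<le> a" unfolding a_def k_def by (intro powr_mono) auto
    finally show ?thesis .
  qed
  have ar: "a \<le> 2 * r"
  proof -
    have "a \<le> 2 powr (log 2 r + 1)" unfolding a_def k_def by (intro powr_mono) linarith+
    also have "\<dots> = 2 * r" using r by (simp add: powr_add)
    finally show ?thesis .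
  qed
  define J0 where "J0 = \<lfloor>Re x / a\<rfloor>"
  define L0 where "L0 = \<lfloor>Im x / a\<rfloor>"
  define Par where "Par = (\<lambda>(u,v). (k, J0+u, L0+v)) ` ({-1..1::int}\<times>{-1..1::int})"
  define T where "T P = {m\<in>{1..M}. dsq (q m) \<subseteq> dsq P}" for P
  define S where "S = {m\<in>{1..M}. dside (q m) \<le> r \<and> dsq (q m) \<inter> ball x r \<noteq> {}}"
  define h where "h m = dside (q m) powr (2 - d)" for m
  have fPar: "finite Par" unfolding Par_def by simp
  have fT: "finite (T P)" for P unfolding T_def by simp
  have cPar: "card Par \<le> 9"
  proof -
    have "card Par \<le> card ({-1..1::int}\<times>{-1..1::int})" unfolding Par_def by (rule card_image_le) simp
    also have "\<dots> = 9" by (simp add: card_cartesian_product)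
    finally show ?thesis .
  qed
  have dPar: "dside P = a" if "P \<in> Par" for P using that unfolding Par_def a_def by (auto simp: dside_def)
  have SU: "S \<subseteq> (\<Union>P\<in>Par. T P)"
  proof
    fix m assume m: "m \<in> S"
    then obtain y where y: "y \<in> dsq (q m)" "y \<in> ball x r" unfolding S_def by auto
    have sub: "dsq (q m) \<subseteq> dsq (k, \<lfloor>Re y / a\<rfloor>, \<lfloor>Im y / a\<rfloor>)"
      unfolding a_def by (rule dyadic_parent[OF _ y(1)]) (use m ra in \<open>auto simp: S_def a_def\<close>)
    have "cmod (x - y) < r" using y(2) by (simp add: dist_norm)
    then have "\<bar>Re x - Re y\<bar> < a" "\<bar>Im x - Im y\<bar> < a"
      using abs_Re_le_cmod[of "x-y"] abs_Im_le_cmod[of "x-y"] ra by auto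
    then have "\<bar>Re y / a - Re x / a\<bar> < 1" "\<bar>Im y / a - Im x / a\<bar> < 1"
      using a0 by (simp_all add: diff_divide_distrib[symmetric] abs_minus_commute)
    then have "\<lfloor>Re y / a\<rfloor> - J0 \<in> {-1..1}" "\<lfloor>Im y / a\<rfloor> - L0 \<in> {-1..1}"
      unfolding J0_def L0_def by (blast intro: floor_close)+
    then have "(k, \<lfloor>Re y / a\<rfloor>, \<lfloor>Im y / a\<rfloor>) \<in> Par" unfolding Par_def
      by (intro image_eqI[of _ _ "(\<lfloor>Re y / a\<rfloor> - J0, \<lfloor>Im y / a\<rfloor> - L0)"]) auto
    moreover have "m \<in> T (k, \<lfloor>Re y / a\<rfloor>, \<lfloor>Im y / a\<rfloor>)" using m sub unfolding T_def S_def by auto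
    ultimately show "m \<in> (\<Union>P\<in>Par. T P)" by blast
  qed
  have "sum h S \<le> sum h (\<Union>P\<in>Par. T P)"
    by (rule sum_mono2[OF _ SU]) (use fPar fT in \<open>auto simp: h_def\<close>)
  also have "\<dots> \<le> (\<Sum>P\<in>Par. sum h (T P))"
    by (rule sum_UN_le[OF fPar]) (use fT in \<open>auto simp: h_def\<close>)
  also have "\<dots> \<le> (\<Sum>P\<in>Par. \<bar>C_P\<bar> * a powr (2 - d))"
  proof (rule sum_mono)
    fix P assume "P \<in> Par"
    have "sum h (T P) \<le> C_P * dside P powr (2 - d)" using P unfolding T_def h_def by blast
    also have "\<dots> \<le> \<bar>C_P\<bar> * a powr (2 - d)" using dPar[OF \<open>P \<in> Par\<close>]
      by (simp add: mult_right_mono)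
    finally show "sum h (T P) \<le> \<bar>C_P\<bar> * a powr (2 - d)" .
  qed
  also have "\<dots> = card Par * (\<bar>C_P\<bar> * a powr (2 - d))" by simp
  also have "\<dots> \<le> 9 * (\<bar>C_P\<bar> * (2 * r) powr (2 - d))"
    by (intro mult_mono) (use cPar a0 ar d in \<open>auto intro!: mult_left_mono powr_mono2\<close>)
  finally show ?thesis unfolding S_def h_def by simp
qed

lemma mu_ball:
  fixes d C_P r :: real and x :: complex and M :: nat and q :: "nat \<Rightarrow> int \<times> int \<times> int"
  assumes disj: "\<forall>m\<in>{1..M}. \<forall>m'\<in>{1..M}. m \<noteq> m' \<longrightarrow> dsq4 (q m) \<inter> dsq4 (q m') = {}"
    and P: "\<forall>Q. (\<Sum>m\<in>{m\<in>{1..M}. dsq (q m) \<subseteq> dsq Q}. dside (q m) powr (2 - d)) \<le> C_P * dside Q powr (2 - d)"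
    and d0: "0 < d" and d: "d < 2" and r: "r > 0"
  shows "emeasure (dmu d M q) (ball x r) \<le> ennreal ((4 + 9 * \<bar>C_P\<bar> * 2 powr (2 - d)) * r powr (2 - d))"
proof -
  define t where "t m = ennreal (dside (q m) powr (- d)) * emeasure lebesgue (dsq (q m) \<inter> ball x r)" for m
  define G where "G = {m\<in>{1..M}. dsq (q m) \<inter> ball x r \<noteq> {}}"
  define L where "L = {m\<in>{1..M}. r < dside (q m) \<and> dsq (q m) \<inter> ball x r \<noteq> {}}"
  define S where "S = {m\<in>{1..M}. dside (q m) \<le> r \<and> dsq (q m) \<inter> ball x r \<noteq> {}}"
  have "emeasure (dmu d M q) (ball x r) = sum t {1..M}"
    unfolding t_def by (rule emeasure_dmu) simp
  also have "\<dots> = sum t G"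
  proof (rule sum.mono_neutral_right)
    show "\<forall>i\<in>{1..M} - G. t i = 0"
    proof
      fix i assume "i \<in> {1..M} - G"
      then have "dsq (q i) \<inter> ball x r = {}" unfolding G_def by auto
      then show "t i = 0" unfolding t_def by (simp only: emeasure_empty mult_zero_right)
    qed
  qed (auto simp: G_def)
  also have "G = L \<union> S" unfolding G_def L_def S_def by auto
  also have "sum t (L \<union> S) = sum t L + sum t S"
    by (rule sum.union_disjoint) (auto simp: L_def S_def)
  also have "sum t L \<le> ennreal (4 * r powr (2 - d))"
  proof -
    have fL: "finite L" unfolding L_def by simp
    have "card L \<le> Suc 0"
    proof (subst card_le_Suc0_iff_eq[OF fL], intro ballI)
      fix m m' assume m: "m \<in> L" and m': "m' \<in> L"
      have "x \<in> dsq4 (q i)" if "i \<in> L" for i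
      proof -
        from that obtain y where y: "y \<in> dsq (q i)" "y \<in> ball x r" "r < dside (q i)" unfolding L_def by auto
        then have "cmod (y - x) < r" by (simp add: dist_norm norm_minus_commute)
        then show ?thesis using near[OF y(1)] y(3) by auto
      qed
      then have "x \<in> dsq4 (q m) \<inter> dsq4 (q m')" using m m' by auto
      then show "m = m'" using disj m m' unfolding L_def by blast
    qed
    have tb: "t m \<le> ennreal (4 * r powr (2 - d))" if "m \<in> L" for m
    proof -
      have "r < dside (q m)" using that unfolding L_def by auto
      then have "dside (q m) powr (- d) \<le> r powr (- d)"
        using r d0 by (intro powr_mono2') auto
      then have "t m \<le> ennreal (r powr (- d)) * ennreal (4 * r powr 2)"
        unfolding t_def using leb_ball[of r x "dsq (q m)"] r
        by (intro mult_mono) (auto simp: Int_commute ennreal_leI)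
      also have "\<dots> = ennreal (4 * r powr (2 - d))"
        using r by (simp add: ennreal_mult'[symmetric] powr_diff powr_minus field_simps)
      finally show ?thesis .
    qed
    have "sum t L \<le> of_nat (card L) * ennreal (4 * r powr (2 - d))"
      by (rule sum_bounded_above) (use tb in auto)
    also have "\<dots> \<le> 1 * ennreal (4 * r powr (2 - d))"
      using \<open>card L \<le> Suc 0\<close> by (intro mult_right_mono) auto
    finally show ?thesis by simp
  qed
  also have "sum t S \<le> ennreal (9 * \<bar>C_P\<bar> * (2 * r) powr (2 - d))"
  proof -
    have "sum t S \<le> (\<Sum>m\<in>S. ennreal (dside (q m) powr (2 - d)))"
    proof (rule sum_mono)
      fix m assume "m \<in> S"
      have s: "dside (q m) > 0" by (rule dside_pos)
      have "t m \<le> ennreal (dside (q m) powr (- d)) * ennreal (dside (q m) powr 2)"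
        unfolding t_def using leb_dsq[of "q m" "ball x r"] by (intro mult_left_mono) auto
      also have "\<dots> = ennreal (dside (q m) powr (2 - d))"
        using s powr_add[of "dside (q m)" "-d" 2] by (simp add: ennreal_mult'[symmetric])
      finally show "t m \<le> ennreal (dside (q m) powr (2 - d))" .
    qed
    also have "\<dots> = ennreal (\<Sum>m\<in>S. dside (q m) powr (2 - d))"
      by (rule sum_ennreal) simp
    also have "\<dots> \<le> ennreal (9 * \<bar>C_P\<bar> * (2 * r) powr (2 - d))"
      unfolding S_def by (intro ennreal_leI S_bound[OF P d r])
    finally show ?thesis .
  qed
  also have "ennreal (4 * r powr (2 - d)) + ennreal (9 * \<bar>C_P\<bar> * (2 * r) powr (2 - d))
      = ennreal ((4 + 9 * \<bar>C_P\<bar> * 2 powr (2 - d)) * r powr (2 - d))"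
    using r by (simp add: ennreal_plus[symmetric] powr_mult algebra_simps del: ennreal_plus)
  finally show ?thesis by (simp add: add_mono)
qed

lemma dsq_disj:
  assumes disj: "\<forall>m\<in>{1..M}. \<forall>m'\<in>{1..M}. m \<noteq> m' \<longrightarrow> dsq4 (q m) \<inter> dsq4 (q m') = {}"
    and "a \<in> {1..M}" "b \<in> {1..M}" "z \<in> dsq (q a)" "z \<in> dsq (q b)"
  shows "a = b"
  using assms dsq_sub4[of "q a"] dsq_sub4[of "q b"] by blast

lemma ennreal_le_suminf: "(f::nat \<Rightarrow> ennreal) n \<le> (\<Sum>n. f n)"
  using sum_le_suminf[of f "{n}"] by simp

lemma K_bound:
  fixes M :: nat and q :: "nat \<Rightarrow> int \<times> int \<times> int"
  assumes disj: "\<forall>m\<in>{1..M}. \<forall>m'\<in>{1..M}. m \<noteq> m' \<longrightarrow> dsq4 (q m) \<inter> dsq4 (q m') = {}"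
    and j: "j \<in> {1..M}" and x: "x \<in> dsq (q j)"
  shows "ennreal (cmod (Kp d M q x y)) \<le>
    (\<Sum>n. ennreal (dside (q j) powr (d - 2) * (1/4)^n) * indicator (ball x (dside (q j) * 2^(n+1))) y)"
proof (cases "Kp d M q x y = 0")
  case True then show ?thesis by simp
next
  case False
  define ll where "ll = dside (q j)"
  have l0: "ll > 0" unfolding ll_def by (rule dside_pos)
  obtain i0 where i0: "i0 \<in> {1..M}" and
    "(\<Sum>j'\<in>{1..M}. if i0 \<noteq> j' \<and> y \<in> dsq (q i0) \<and> x \<in> dsq (q j')
       then complex_of_real (dside (q j') powr d) / (x - y)^2 else 0) \<noteq> 0"
    using False unfolding Kp_def by (rule sum.not_neutral_contains_not_neutral)
  from this(2) obtain j' where j': "j' \<in> {1..M}" and "(if i0 \<noteq> j' \<and> y \<in> dsq (q i0) \<and> x \<in> dsq (q j')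
       then complex_of_real (dside (q j') powr d) / (x - y)^2 else (0::complex)) \<noteq> 0"
    by (rule sum.not_neutral_contains_not_neutral)
  then have c: "i0 \<noteq> j'" "y \<in> dsq (q i0)" "x \<in> dsq (q j')" by (auto split: if_splits)
  have jj: "j' = j" using dsq_disj[OF disj j' j c(3) x] .
  have "Kp d M q x y = (\<Sum>i\<in>{1..M}. \<Sum>j''\<in>{1..M}. if i = i0 \<and> j'' = j then complex_of_real (ll powr d) / (x - y)^2 else 0)"
    unfolding Kp_def
  proof (intro sum.cong refl)
    fix i j'' assume i: "i \<in> {1..M}" and j'': "j'' \<in> {1..M}"
    have "(i \<noteq> j'' \<and> y \<in> dsq (q i) \<and> x \<in> dsq (q j'')) = (i = i0 \<and> j'' = j)"
      using dsq_disj[OF disj i i0 _ c(2)] dsq_disj[OF disj j'' j _ x] c jj by blast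
    then show "(if i \<noteq> j'' \<and> y \<in> dsq (q i) \<and> x \<in> dsq (q j'') then complex_of_real (dside (q j'') powr d) / (x - y)^2 else 0)
      = (if i = i0 \<and> j'' = j then complex_of_real (ll powr d) / (x - y)^2 else 0)"
      unfolding ll_def by auto
  qed
  also have "\<dots> = complex_of_real (ll powr d) / (x - y)^2"
  proof -
    have "(\<Sum>j''\<in>{1..M}. if i = i0 \<and> j'' = j then complex_of_real (ll powr d) / (x - y)^2 else 0)
       = (if i = i0 then complex_of_real (ll powr d) / (x - y)^2 else 0)" for i
      using j by (cases "i = i0") (simp_all add: sum.delta')
    then show ?thesis using i0 by (simp add: sum.delta')
  qed
  finally have K: "Kp d M q x y = complex_of_real (ll powr d) / (x - y)^2" .
  define rh where "rh = cmod (x - y)"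
  have yn: "y \<notin> dsq4 (q j)" using disj i0 j c jj dsq_sub4[of "q i0"] by blast
  have rho: "rh \<ge> ll" unfolding rh_def ll_def by (rule far[OF x yn])
  have cK: "cmod (Kp d M q x y) = ll powr d / rh^2"
    unfolding K rh_def by (simp add: norm_divide norm_power)
  define n where "n = nat \<lfloor>log 2 (rh / ll)\<rfloor>"
  have q1: "rh / ll \<ge> 1" using rho l0 by simp
  have lg: "log 2 (rh / ll) \<ge> 0" using q1 by simp
  have "2^n = 2 powr (real n)" by (simp add: powr_realpow)
  also have "\<dots> \<le> 2 powr (log 2 (rh / ll))" unfolding n_def using lg by (intro powr_mono) auto
  also have "\<dots> = rh / ll" using q1 by simp
  finally have n1: "ll * 2^n \<le> rh" using l0 by (simp add: field_simps)
  have "rh / ll = 2 powr (log 2 (rh / ll))" using q1 by simp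
  also have "\<dots> < 2 powr (real (n+1))" unfolding n_def using lg by (intro powr_less_mono) linarith+
  also have "\<dots> = 2^(n+1)" by (rule powr_realpow) simp
  finally have n2: "rh < ll * 2^(n+1)" using l0 by (simp add: field_simps)
  have "ll powr d / rh^2 \<le> ll powr d / (ll * 2^n)^2"
  proof -
    have p: "ll * 2^n > 0" using l0 by simp
    show ?thesis using n1 p by (intro divide_left_mono power_mono mult_pos_pos) auto
  qed
  also have "\<dots> = ll powr (d - 2) * (1/4)^n"
  proof -
    have f4: "(2::real)^(n*2) = 4^n"
      by (metis mult.commute power_mult power2_eq_square numeral_times_numeral num_double)
    show ?thesis
      using l0 f4 by (simp add: powr_diff power_mult_distrib field_simps power_mult[symmetric] powr_realpow)
  qed
  finally have b: "cmod (Kp d M q x y) \<le> ll powr (d - 2) * (1/4)^n" using cK by simp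
  have yb: "y \<in> ball x (ll * 2^(n+1))" using n2 unfolding rh_def by (simp add: dist_norm)
  have "ennreal (cmod (Kp d M q x y)) \<le> ennreal (ll powr (d - 2) * (1/4)^n) * indicator (ball x (ll * 2^(n+1))) y"
    using b yb by (simp add: ennreal_leI)
  also have "\<dots> \<le> (\<Sum>n. ennreal (ll powr (d - 2) * (1/4)^n) * indicator (ball x (ll * 2^(n+1))) y)"
    by (rule ennreal_le_suminf)
  finally show ?thesis unfolding ll_def .
qed

lemma maxfn_step:
  fixes \<mu> :: "complex measure"
  assumes R: "R > 0" and fin: "emeasure \<mu> (ball x (3*R)) < \<infinity>"
    and s1: "ball x R \<in> sets \<mu>" and s3: "ball x (3*R) \<in> sets \<mu>"
  shows "(\<integral>\<^sup>+ y\<in>ball x R. ennreal (cmod (f y)) \<partial>\<mu>) \<le> emeasure \<mu> (ball x (3*R)) * maxfn3 \<mu> f x"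
proof -
  define a where "a = (\<integral>\<^sup>+ y\<in>ball x R. ennreal (cmod (f y)) \<partial>\<mu>)"
  define b where "b = emeasure \<mu> (ball x (3*R))"
  have q: "a / b \<le> maxfn3 \<mu> f x"
    unfolding maxfn3_def a_def b_def by (rule SUP_upper2[of R]) (use R in auto)
  show ?thesis
  proof (cases "b = 0")
    case True
    have "ball x R \<subseteq> ball x (3*R)" using R by (intro subset_ball) auto
    then have "emeasure \<mu> (ball x R) \<le> b" unfolding b_def by (intro emeasure_mono s3)
    then have "ball x R \<in> null_sets \<mu>" using True s1 by auto
    then have "a = 0" unfolding a_def by (rule nn_integral_null_set)
    then show ?thesis unfolding a_def by simp
  next
    case False
    have "a = a / b * b" using False fin unfolding b_def[symmetric]
      by (simp add: ennreal_divide_times)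
    also have "\<dots> \<le> maxfn3 \<mu> f x * b" using q by (intro mult_right_mono) auto
    finally show ?thesis unfolding a_def b_def by (simp add: mult.commute)
  qed
qed

lemma e3: assumes "ll > 0" shows "ll powr (d - 2) * ll powr (2 - d) = (1::real)" 
proof -
  have "ll powr (d - 2) * ll powr (2 - d) = ll powr ((d - 2) + (2 - d))" by (rule powr_add[symmetric])
  also have "(d - 2) + (2 - d) = 0" by simp
  finally show ?thesis using assms by simp
qed
lemma e4: "(1/4) * 2 powr (2 - d) = (2::real) powr (- d)"
proof -
  have "(2::real) powr (2 - d) = 2 powr (2 + (-d))" by simp
  also have "\<dots> = 2 powr 2 * 2 powr (-d)" by (rule powr_add)
  finally show ?thesis by simp
qed
lemma e2: "((2::real)^n) powr (2 - d) = (2 powr (2 - d))^n"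
proof -
  have "((2::real)^n) = 2 powr (real n)" by (simp add: powr_realpow)
  then have "((2::real)^n) powr (2 - d) = 2 powr (real n * (2 - d))" by (simp add: powr_powr)
  also have "\<dots> = (2 powr (2 - d))^n" by (simp add: powr_power mult.commute)
  finally show ?thesis .
qed
lemma real_ident:
  fixes ll K0 d :: real assumes l: "ll > 0"
  shows "ll powr (d - 2) * (1/4)^n * (K0 * (3 * (ll * 2^(n+1))) powr (2 - d)) = K0 * 6 powr (2 - d) * (2 powr (- d))^n"
proof -
  have e1: "3 * (ll * 2^(n+1)) = 6 * ll * 2^n" by simp
  have e5: "(6 * ll * 2^n) powr (2 - d) = 6 powr (2 - d) * ll powr (2 - d) * (2 powr (2 - d))^n"
    using l by (simp add: powr_mult e2)
  have "ll powr (d - 2) * (1/4)^n * (K0 * (3 * (ll * 2^(n+1))) powr (2 - d))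
     = K0 * 6 powr (2 - d) * (ll powr (d - 2) * ll powr (2 - d)) * ((1/4)^n * (2 powr (2 - d))^n)"
    unfolding e1 e5 by (simp only: mult_ac)
  also have "\<dots> = K0 * 6 powr (2 - d) * (2 powr (- d))^n"
    unfolding e3[OF l] power_mult_distrib[symmetric] e4 by simp
  finally show ?thesis .
qed

theorem lemma2:
  fixes d C_P :: real
  assumes "0 < d" and "d < 2"
  shows "\<exists>C::real. \<forall>(M::nat) (q::nat \<Rightarrow> int \<times> int \<times> int).
    (\<forall>m\<in>{1..M}. \<forall>m'\<in>{1..M}. m \<noteq> m' \<longrightarrow> dsq4 (q m) \<inter> dsq4 (q m') = {}) \<and>
    (\<forall>Q. (\<Sum>m\<in>{m\<in>{1..M}. dsq (q m) \<subseteq> dsq Q}. dside (q m) powr (2 - d))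
            \<le> C_P * dside Q powr (2 - d))
    \<longrightarrow> (\<forall>f::complex \<Rightarrow> complex. f \<in> borel_measurable (dmu d M q) \<longrightarrow>
         (\<forall>x\<in>(\<Union>m\<in>{1..M}. dsq (q m)).
            ennreal (cmod (\<integral>y. Kp d M q x y * f y \<partial>(dmu d M q)))
              \<le> (\<integral>\<^sup>+ y. ennreal (cmod (Kp d M q x y) * cmod (f y)) \<partial>(dmu d M q))
          \<and> (\<integral>\<^sup>+ y. ennreal (cmod (Kp d M q x y) * cmod (f y)) \<partial>(dmu d M q))
              \<le> ennreal C * maxfn3 (dmu d M q) f x))"
proof -
  note d0 = assms(1) and d2 = assms(2)
  define K0 where "K0 = 4 + 9 * \<bar>C_P\<bar> * 2 powr (2 - d)"
  define C where "C = K0 * 6 powr (2 - d) / (1 - 2 powr (- d))"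
  show ?thesis
  proof (intro exI[of _ C] allI impI ballI conjI)
    fix M :: nat and q :: "nat \<Rightarrow> int \<times> int \<times> int" and f :: "complex \<Rightarrow> complex" and x
    assume H: "(\<forall>m\<in>{1..M}. \<forall>m'\<in>{1..M}. m \<noteq> m' \<longrightarrow> dsq4 (q m) \<inter> dsq4 (q m') = {}) \<and>
      (\<forall>Q. (\<Sum>m\<in>{m\<in>{1..M}. dsq (q m) \<subseteq> dsq Q}. dside (q m) powr (2 - d)) \<le> C_P * dside Q powr (2 - d))"
      and fm[measurable]: "f \<in> borel_measurable (dmu d M q)"
      and xX: "x \<in> (\<Union>m\<in>{1..M}. dsq (q m))"
    note disj = H[THEN conjunct1] and P = H[THEN conjunct2]
    define \<mu> where "\<mu> = dmu d M q"
    show "ennreal (cmod (\<integral>y. Kp d M q x y * f y \<partial>(dmu d M q)))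
              \<le> (\<integral>\<^sup>+ y. ennreal (cmod (Kp d M q x y) * cmod (f y)) \<partial>(dmu d M q))"
    proof (cases "integrable (dmu d M q) (\<lambda>y. Kp d M q x y * f y)")
      case True
      from integral_norm_bound_ennreal[OF True] show ?thesis by (simp add: norm_mult)
    next
      case False
      then show ?thesis by (simp add: not_integrable_integral_eq)
    qed
    from xX obtain j where j: "j \<in> {1..M}" and x: "x \<in> dsq (q j)" by auto
    define ll where "ll = dside (q j)"
    have l0: "ll > 0" unfolding ll_def by (rule dside_pos)
    define c where "c n = ll powr (d - 2) * (1/4)^n" for n :: nat
    define B where "B n = ball x (ll * 2^(n+1))" for n :: nat
    define F where "F y = ennreal (cmod (f y))" for y
    define Mf where "Mf = maxfn3 (dmu d M q) f x"
    have Fm[measurable]: "F \<in> borel_measurable (dmu d M q)" unfolding F_def by measurable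
    have Bs[measurable]: "B n \<in> sets (dmu d M q)" for n unfolding B_def by simp
    have "(\<integral>\<^sup>+ y. ennreal (cmod (Kp d M q x y) * cmod (f y)) \<partial>(dmu d M q))
        \<le> (\<integral>\<^sup>+ y. (\<Sum>n. ennreal (c n) * indicator (B n) y) * F y \<partial>(dmu d M q))"
    proof (rule nn_integral_mono)
      fix y
      have "ennreal (cmod (Kp d M q x y) * cmod (f y)) = ennreal (cmod (Kp d M q x y)) * F y"
        unfolding F_def by (simp add: ennreal_mult)
      also have "\<dots> \<le> (\<Sum>n. ennreal (c n) * indicator (B n) y) * F y"
        using K_bound[OF disj j x, of d y] unfolding c_def B_def ll_def by (intro mult_right_mono) auto
      finally show "ennreal (cmod (Kp d M q x y) * cmod (f y)) \<le> (\<Sum>n. ennreal (c n) * indicator (B n) y) * F y" .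
    qed
    also have "\<dots> = (\<integral>\<^sup>+ y. (\<Sum>n. ennreal (c n) * (F y * indicator (B n) y)) \<partial>(dmu d M q))"
      apply (rule nn_integral_cong)
      apply (subst ennreal_suminf_multc[symmetric])
      apply (rule suminf_cong)
      apply (simp add: mult_ac)
      done
    also have "\<dots> = (\<Sum>n. \<integral>\<^sup>+ y. ennreal (c n) * (F y * indicator (B n) y) \<partial>(dmu d M q))"
      by (rule nn_integral_suminf[of "\<lambda>n y. ennreal (c n) * (F y * indicator (B n) y)"]) measurable
    also have "\<dots> = (\<Sum>n. ennreal (c n) * (\<integral>\<^sup>+ y\<in>B n. F y \<partial>(dmu d M q)))"
      by (intro suminf_cong nn_integral_cmult) measurable
    also have "\<dots> \<le> (\<Sum>n. ennreal (c n) * (ennreal (K0 * (3 * (ll * 2^(n+1))) powr (2 - d)) * Mf))"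
    proof (intro suminf_le mult_left_mono) 
      fix n
      define R where "R = ll * 2^(n+1)"
      have R: "R > 0" unfolding R_def using l0 by simp
      have mb: "emeasure (dmu d M q) (ball x (3 * R)) \<le> ennreal (K0 * (3 * R) powr (2 - d))"
        unfolding K0_def using mu_ball[OF disj P d0 d2, of "3 * R" x] R by simp
      then have fin: "emeasure (dmu d M q) (ball x (3 * R)) < \<infinity>"
        using le_less_trans by fastforce
      have "(\<integral>\<^sup>+ y\<in>B n. F y \<partial>(dmu d M q)) \<le> emeasure (dmu d M q) (ball x (3 * R)) * Mf"
        unfolding B_def F_def Mf_def R_def[symmetric] by (rule maxfn_step[OF R fin]) auto
      also have "\<dots> \<le> ennreal (K0 * (3 * R) powr (2 - d)) * Mf"
        using mb by (intro mult_right_mono) auto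
      finally show "(\<integral>\<^sup>+ y\<in>B n. F y \<partial>(dmu d M q)) \<le> ennreal (K0 * (3 * (ll * 2^(n+1))) powr (2 - d)) * Mf"
        unfolding R_def .
    qed auto
    also have "\<dots> = (\<Sum>n. ennreal (K0 * 6 powr (2 - d) * (2 powr (- d))^n)) * Mf"
    proof -
      have "ennreal (c n) * (ennreal (K0 * (3 * (ll * 2^(n+1))) powr (2 - d)) * Mf)
          = ennreal (K0 * 6 powr (2 - d) * (2 powr (- d))^n) * Mf" (is "?L n = ?R n") for n
      proof -
        have "ennreal (c n) * (ennreal (K0 * (3 * (ll * 2^(n+1))) powr (2 - d)) * Mf)
          = ennreal (c n * (K0 * (3 * (ll * 2^(n+1))) powr (2 - d))) * Mf"
        proof -
          have cn: "c n \<ge> 0" unfolding c_def by simp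
          have X: "K0 * (3 * (ll * 2^(n+1))) powr (2 - d) \<ge> 0" unfolding K0_def by simp
          show ?thesis using ennreal_mult[OF cn X] by (simp add: mult.assoc)
        qed
        also have "c n * (K0 * (3 * (ll * 2^(n+1))) powr (2 - d)) = K0 * 6 powr (2 - d) * (2 powr (- d))^n"
          unfolding c_def by (rule real_ident[OF l0])
        finally show ?thesis .
      qed
      then show ?thesis by (subst ennreal_suminf_multc[symmetric]) (rule suminf_cong)
    qed
    also have "(\<Sum>n. ennreal (K0 * 6 powr (2 - d) * (2 powr (- d))^n)) = ennreal C"
    proof -
      have "(2::real) powr (- d) < 2 powr 0" using d0 by (intro powr_less_mono) auto
      then have q1: "norm ((2::real) powr (- d)) < 1" by simp
      have K0: "K0 \<ge> 0" unfolding K0_def by simp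
      have "(\<Sum>n. ennreal (K0 * 6 powr (2 - d) * (2 powr (- d))^n)) = ennreal (\<Sum>n. K0 * 6 powr (2 - d) * (2 powr (- d))^n)"
        using K0 by (intro suminf_ennreal2 summable_mult summable_geometric[OF q1]) auto
      also have "(\<Sum>n. K0 * 6 powr (2 - d) * (2 powr (- d))^n) = K0 * 6 powr (2 - d) * (1 / (1 - 2 powr (- d)))"
        by (subst suminf_mult[OF summable_geometric[OF q1]]) (simp add: suminf_geometric[OF q1])
      finally show ?thesis unfolding C_def by simp
    qed
    finally show "(\<integral>\<^sup>+ y. ennreal (cmod (Kp d M q x y) * cmod (f y)) \<partial>(dmu d M q)) \<le> ennreal C * maxfn3 (dmu d M q) f x"
      unfolding Mf_def .
  qed
qed

end
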